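(* Assume Assumption 1, and assume that for every finite collection of samples one of the following holds: (1) the game $\mathcal G$ admits a unique Nash equilibrium; or (2) $g(x,\theta)=\tilde g(\sigma(x),\theta)$ depends on $x$ only through the aggregate $\sigma(x)=\sum_{i\in\mathcal N}x_i$, and all Nash equilibria of $\mathcal G$ have the same aggregate $\sigma(x)$. Given samples $\theta_1,\dots,\theta_M$, let $(x^*,y^* )$ be the minimum-Euclidean-norm solution of $\mathrm{VI}(F,\mathcal X\times\Delta_M)$ (so $x^*=\Phi(\theta_1,\dots,\theta_M)$), and let $\mathcal Y^*=\{m\in\{1,\dots,M\}: y^*_m>0\}$. Then $\{\theta_m\}_{m\in\mathcal Y^*}$ is a compression set, i.e. $\Phi(\{\theta_m\}_{m\in\mathcal Y^*})=\Phi(\theta_1,\dots,\theta_M)=x^*$.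
   Context: Let $\mathcal N=\{1,\dots,N\}$ be a set of agents. Agent $i$ chooses $x_i\in\mathcal X_i\subset\mathbb R^n$; write $x=(x_i)_{i\in\mathcal N}\in\mathcal X=\mathcal X_1\times\cdots\times\mathcal X_N\subset\mathbb R^{nN}$ and $x_{-i}=(x_j)_{j\neq i}$. Let $\Theta$ be a set, $f_i:\mathbb R^{nN}\to\mathbb R$, $g:\mathbb R^{nN}\times\Theta\to\mathbb R$. For samples $S=\{\vartheta_1,\dots,\vartheta_K\}$, the game $\mathcal G(S)$ has each agent $i$ minimize over $x_i\in\mathcal X_i$ the cost $f_i(x)+\max_{\vartheta\in S}g(x,\vartheta)$; a Nash equilibrium is $x^*\in\mathcal X$ with $x^*_i$ optimal for each $i$ given $x^*_{-i}$. Assumption 1 (in case (2) with $g(\cdot,x_{-i},\theta)$ read as $\tilde g(\sigma(\cdot,x_{-i}),\theta)$): (i) for every $\theta\in\Theta$ and every $x_{-i}\in\prod_{j\ne i}\mathcal X_j$, $f_i(\cdot,x_{-i})+g(\cdot,x_{-i},\theta)$ is convex and continuously differentiable, and each $\mathcal X_i$ is nonempty, compact and convex; (ii) for every $\theta$ and $i$, $g(\cdot,\theta)$ and $f_i$ are twice differentiable on an open convex set containing $\mathcal X$; (iii) there are $\chi^f,\chi^g\in\mathbb R$ with $\chi^f+\chi^g\ge0$ such that for all $u,v\in\mathbb R^{nN}$ and $\theta\in\Theta$: $(u-v)^\top\big((\nabla_{u_i}f_i(u))_{i}-(\nabla_{v_i}f_i(v))_{i}\big)\ge\chi^f\|u-v\|^2$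 and $(u-v)^\top(\nabla_u g(u,\theta)-\nabla_v g(v,\theta))\ge\chi^g\|u-v\|^2$. For samples $\vartheta_1,\dots,\vartheta_K$: $\Delta_K=\{y\in\mathbb R^K:y\ge0,\sum_m y_m=1\}$, $\hat g(x,y)=\sum_m y_m g(x,\vartheta_m)$, $F(x,y)=\big((\nabla_{x_i}f_i(x)+\nabla_{x_i}\hat g(x,y))_i,\ -(g(x,\vartheta_m))_{m=1}^K\big)$; $\mathrm{VI}(F,\mathcal X\times\Delta_K)$: find $z^*\in\mathcal X\times\Delta_K$ with $(z-z^* )^\top F(z^* )\ge0$ for all $z\in\mathcal X\times\Delta_K$. $\Phi(\vartheta_1,\dots,\vartheta_K)$ is the $x$-component of the minimum-Euclidean-norm solution of this VI. A subcollection $\mathcal C$ of $\{\theta_1,\dots,\theta_M\}$ is a compression set if $\Phi(\mathcal C)=\Phi(\theta_1,\dots,\theta_M)$. *)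

theory Defs
  imports "HOL-Analysis.Analysis"
begin

text \<open>Joint strategy profiles x = (x_i) are elements of real^'n^'i: the agents form
  the finite index type 'i, each x_i = x $ i lies in real^'n.  The Euclidean norm on
  real^'n^'i is the norm on R^{nN}.\<close>

definition upd :: "real^'n^'i \<Rightarrow> 'i \<Rightarrow> real^'n \<Rightarrow> real^'n^'i" where
  "upd x i xi = (\<chi> j. if j = i then xi else x $ j)"

definition profiles :: "('i \<Rightarrow> (real^'n) set) \<Rightarrow> (real^'n^'i) set" where
  "profiles X = {x. \<forall>i. x $ i \<in> X i}"

definition aggregate :: "real^'n^'i \<Rightarrow> real^'n" where
  "aggregate x = (\<Sum>i\<in>UNIV. x $ i)"

definition game_cost ::
  "('i \<Rightarrow> real^'n^'i \<Rightarrow> real) \<Rightarrow> (real^'n^'i \<Rightarrow> 'th \<Rightarrow> real) \<Rightarrow> 'th set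
     \<Rightarrow> 'i \<Rightarrow> real^'n^'i \<Rightarrow> real" where
  "game_cost f g S i x = f i x + Max ((\<lambda>\<theta>. g x \<theta>) ` S)"

definition is_NE ::
  "('i \<Rightarrow> (real^'n) set) \<Rightarrow> ('i \<Rightarrow> real^'n^'i \<Rightarrow> real) \<Rightarrow> (real^'n^'i \<Rightarrow> 'th \<Rightarrow> real)
     \<Rightarrow> 'th set \<Rightarrow> real^'n^'i \<Rightarrow> bool" where
  "is_NE X f g S x \<longleftrightarrow> x \<in> profiles X \<and>
     (\<forall>i. \<forall>xi\<in>X i. game_cost f g S i x \<le> game_cost f g S i (upd x i xi))"

definition prob_simplex :: "nat \<Rightarrow> (nat \<Rightarrow> real) set" where
  "prob_simplex K = {y. (\<forall>m<K. 0 \<le> y m) \<and> (\<forall>m\<ge>K. y m = 0) \<and> (\<Sum>m<K. y m) = 1}"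

text \<open>Df i x is the (full) gradient of f_i at x, Dg x theta the gradient of g(.,theta) at x.
  The map F of the VI, paired with a direction (x', y') - (x, y):
  (z'-z)^T F(z) = sum_i (x'_i - x_i) . (grad_{x_i} f_i(x) + sum_m y_m grad_{x_i} g(x,theta_m))
                  - sum_m (y'_m - y_m) g(x,theta_m).\<close>
definition VI_pairing ::
  "('i \<Rightarrow> real^'n^'i \<Rightarrow> real^'n^'i) \<Rightarrow> (real^'n^'i \<Rightarrow> 'th \<Rightarrow> real^'n^'i)
     \<Rightarrow> (real^'n^'i \<Rightarrow> 'th \<Rightarrow> real) \<Rightarrow> 'th list
     \<Rightarrow> real^'n^'i \<Rightarrow> (nat \<Rightarrow> real) \<Rightarrow> real^'n^'i \<Rightarrow> (nat \<Rightarrow> real) \<Rightarrow> real" where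
  "VI_pairing Df Dg g ths x y x' y' =
     (\<Sum>i\<in>UNIV. (x' $ i - x $ i) \<bullet>
        ((Df i x) $ i + (\<Sum>m<length ths. y m *\<^sub>R (Dg x (ths ! m)) $ i)))
     - (\<Sum>m<length ths. (y' m - y m) * g x (ths ! m))"

definition VI_sol ::
  "('i \<Rightarrow> (real^'n) set) \<Rightarrow> ('i \<Rightarrow> real^'n^'i \<Rightarrow> real^'n^'i) \<Rightarrow> (real^'n^'i \<Rightarrow> 'th \<Rightarrow> real^'n^'i)
     \<Rightarrow> (real^'n^'i \<Rightarrow> 'th \<Rightarrow> real) \<Rightarrow> 'th list \<Rightarrow> real^'n^'i \<Rightarrow> (nat \<Rightarrow> real) \<Rightarrow> bool" where
  "VI_sol X Df Dg g ths x y \<longleftrightarrow> x \<in> profiles X \<and> y \<in> prob_simplex (length ths) \<and>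
     (\<forall>x'\<in>profiles X. \<forall>y'\<in>prob_simplex (length ths). 0 \<le> VI_pairing Df Dg g ths x y x' y')"

definition sqnorm_xy :: "nat \<Rightarrow> real^'n^'i \<Rightarrow> (nat \<Rightarrow> real) \<Rightarrow> real" where
  "sqnorm_xy K x y = (norm x)^2 + (\<Sum>m<K. (y m)^2)"

definition VI_minnorm_sol ::
  "('i \<Rightarrow> (real^'n) set) \<Rightarrow> ('i \<Rightarrow> real^'n^'i \<Rightarrow> real^'n^'i) \<Rightarrow> (real^'n^'i \<Rightarrow> 'th \<Rightarrow> real^'n^'i)
     \<Rightarrow> (real^'n^'i \<Rightarrow> 'th \<Rightarrow> real) \<Rightarrow> 'th list \<Rightarrow> real^'n^'i \<Rightarrow> (nat \<Rightarrow> real) \<Rightarrow> bool" where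
  "VI_minnorm_sol X Df Dg g ths x y \<longleftrightarrow> VI_sol X Df Dg g ths x y \<and>
     (\<forall>x' y'. VI_sol X Df Dg g ths x' y' \<longrightarrow>
        sqnorm_xy (length ths) x y \<le> sqnorm_xy (length ths) x' y')"

definition Phi ::
  "('i \<Rightarrow> (real^'n) set) \<Rightarrow> ('i \<Rightarrow> real^'n^'i \<Rightarrow> real^'n^'i) \<Rightarrow> (real^'n^'i \<Rightarrow> 'th \<Rightarrow> real^'n^'i)
     \<Rightarrow> (real^'n^'i \<Rightarrow> 'th \<Rightarrow> real) \<Rightarrow> 'th list \<Rightarrow> real^'n^'i" where
  "Phi X Df Dg g ths = fst (THE z. VI_minnorm_sol X Df Dg g ths (fst z) (snd z))"

end

theory Submission
  imports Defs
begin


lemma profiles_convex: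
  assumes "\<And>i. convex (X i)"
  shows "convex (profiles X)"
  unfolding convex_def profiles_def
  using assms by (auto intro: convexD)

lemma upd_in_profiles: "x \<in> profiles X \<Longrightarrow> xi \<in> X i \<Longrightarrow> upd x i xi \<in> profiles X"
  by (auto simp: profiles_def upd_def)

lemma upd_same: "upd x i (x $ i) = x"
  by (simp add: upd_def vec_eq_iff)

lemma inner_upd: "(upd x i xi - x) \<bullet> v = (xi - x $ i) \<bullet> (v $ i)"
proof -
  have "(upd x i xi - x) \<bullet> v = (\<Sum>j\<in>UNIV. if j = i then (xi - x $ i) \<bullet> (v $ i) else 0)"
    unfolding inner_vec_def by (rule sum.cong) (auto simp: upd_def)
  also have "\<dots> = (xi - x $ i) \<bullet> (v $ i)" by simp
  finally show ?thesis .
qed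

lemma upd_line: "upd x i ((1 - t) *\<^sub>R (x $ i) + t *\<^sub>R xi) = x + t *\<^sub>R (upd x i xi - x)"
  by (simp add: upd_def vec_eq_iff algebra_simps)

definition PG :: "('i \<Rightarrow> real^'n^'i \<Rightarrow> real^'n^'i) \<Rightarrow> real^'n^'i \<Rightarrow> real^'n^'i" where
  "PG Df x = (\<chi> i. (Df i x) $ i)"

lemma inner_vec_outer: "(a::real^'n^'i) \<bullet> b = (\<Sum>i\<in>UNIV. a $ i \<bullet> b $ i)"
  by (simp add: inner_vec_def)

lemma pairing_eq:
  "VI_pairing Df Dg g ths x y x' y' =
     (x' - x) \<bullet> PG Df x + (\<Sum>m<length ths. y m * ((x' - x) \<bullet> Dg x (ths ! m)))
     - (\<Sum>m<length ths. (y' m - y m) * g x (ths ! m))"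
proof -
  have "(\<Sum>i\<in>UNIV. (x' $ i - x $ i) \<bullet> ((Df i x) $ i + (\<Sum>m<length ths. y m *\<^sub>R (Dg x (ths ! m)) $ i)))
     = (\<Sum>i\<in>UNIV. (x' - x) $ i \<bullet> (PG Df x) $ i) + (\<Sum>m<length ths. y m * (\<Sum>i\<in>UNIV. (x' - x) $ i \<bullet> Dg x (ths ! m) $ i))"
    by (simp add: PG_def inner_add_right inner_sum_right sum.distrib sum_distrib_left sum.swap[of _ UNIV])
  then show ?thesis unfolding VI_pairing_def by (simp only: inner_vec_outer[symmetric])
qed

locale gm =
  fixes X :: "'i::finite \<Rightarrow> (real^'n::finite) set"
    and f :: "'i \<Rightarrow> real^'n^'i \<Rightarrow> real"
    and Df :: "'i \<Rightarrow> real^'n^'i \<Rightarrow> real^'n^'i"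
    and g :: "real^'n^'i \<Rightarrow> 'th \<Rightarrow> real"
    and Dg :: "real^'n^'i \<Rightarrow> 'th \<Rightarrow> real^'n^'i"
    and Theta :: "'th set"
    and chi_f chi_g :: real
  assumes X_convex: "\<And>i. convex (X i)"
    and cost_convex: "\<And>i th x. th \<in> Theta \<Longrightarrow> x \<in> profiles X \<Longrightarrow>
          convex_on (X i) (\<lambda>xi. f i (upd x i xi) + g (upd x i xi) th)"
    and f_twice: "\<And>i. \<exists>U. open U \<and> convex U \<and> profiles X \<subseteq> U \<and>
          (\<forall>x\<in>U. (f i has_derivative (\<lambda>h. Df i x \<bullet> h)) (at x) \<and> Df i differentiable (at x))"
    and g_twice: "\<And>th. th \<in> Theta \<Longrightarrow> \<exists>U. open U \<and> convex U \<and> profiles X \<subseteq> U \<and>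
          (\<forall>x\<in>U. ((\<lambda>u. g u th) has_derivative (\<lambda>h. Dg x th \<bullet> h)) (at x) \<and>
                   (\<lambda>u. Dg u th) differentiable (at x))"
    and chi_sum: "chi_f + chi_g \<ge> 0"
    and f_mono: "\<And>u v. (u - v) \<bullet> ((\<chi> i. (Df i u) $ i) - (\<chi> i. (Df i v) $ i))
                         \<ge> chi_f * (norm (u - v))^2"
    and g_mono: "\<And>u v th. th \<in> Theta \<Longrightarrow> (u - v) \<bullet> (Dg u th - Dg v th) \<ge> chi_g * (norm (u - v))^2"
begin

lemma P_convex: "convex (profiles X)"
  by (rule profiles_convex[OF X_convex])

lemma f_der: "x \<in> profiles X \<Longrightarrow> (f i has_derivative (\<lambda>h. Df i x \<bullet> h)) (at x)"
  using f_twice[of i] by blast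

lemma Df_cont: "x \<in> profiles X \<Longrightarrow> isCont (Df i) x"
  using f_twice[of i] by (blast intro: differentiable_imp_continuous_within)

lemma g_der: "th \<in> Theta \<Longrightarrow> x \<in> profiles X \<Longrightarrow> ((\<lambda>u. g u th) has_derivative (\<lambda>h. Dg x th \<bullet> h)) (at x)"
  using g_twice[of th] by blast

lemma Dg_cont: "th \<in> Theta \<Longrightarrow> x \<in> profiles X \<Longrightarrow> isCont (\<lambda>u. Dg u th) x"
  using g_twice[of th] by (blast intro: differentiable_imp_continuous_within)

lemma g_cont: "th \<in> Theta \<Longrightarrow> x \<in> profiles X \<Longrightarrow> isCont (\<lambda>u. g u th) x"
  using g_der has_derivative_continuous by blast

lemma seg_in: "x \<in> profiles X \<Longrightarrow> x' \<in> profiles X \<Longrightarrow> 0 \<le> t \<Longrightarrow> t \<le> 1 \<Longrightarrow> x + t *\<^sub>R (x' - x) \<in> profiles X"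
  using convexD[OF P_convex, of x x' "1 - t" t] by (simp add: algebra_simps)

lemma line_der:
  assumes "\<And>z. z \<in> profiles X \<Longrightarrow> (h has_derivative (\<lambda>v. D z \<bullet> v)) (at z)"
    and "x + t *\<^sub>R d \<in> profiles X"
  shows "((\<lambda>t. h (x + t *\<^sub>R d)) has_field_derivative (D (x + t *\<^sub>R d) \<bullet> d)) (at t)"
proof -
  have l: "((\<lambda>t. x + t *\<^sub>R d) has_derivative (\<lambda>s. s *\<^sub>R d)) (at t)"
    by (auto intro!: derivative_eq_intros)
  have "((\<lambda>t. h (x + t *\<^sub>R d)) has_derivative (\<lambda>s. D (x + t *\<^sub>R d) \<bullet> (s *\<^sub>R d))) (at t)"
    using has_derivative_compose[OF l assms(1)[OF assms(2)]] by (simp add: o_def)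
  moreover have "(\<lambda>s. D (x + t *\<^sub>R d) \<bullet> (s *\<^sub>R d)) = (*) (D (x + t *\<^sub>R d) \<bullet> d)"
    by (auto simp: mult.commute)
  ultimately show ?thesis by (simp add: has_field_derivative_def)
qed

lemma g_lower:
  assumes th: "th \<in> Theta" and x: "x \<in> profiles X" and x': "x' \<in> profiles X"
  shows "g x' th - g x th - (x' - x) \<bullet> Dg x th \<ge> chi_g / 2 * (norm (x' - x))^2"
proof -
  define d where "d = x' - x"
  define \<phi> where "\<phi> t = g (x + t *\<^sub>R d) th - t * (d \<bullet> Dg x th) - chi_g / 2 * t^2 * (norm d)^2" for t
  have "\<phi> 0 \<le> \<phi> 1"
  proof (rule DERIV_nonneg_imp_nondecreasing[of 0 1])
    fix t :: real assume t: "0 \<le> t" "t \<le> 1"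
    have zin: "x + t *\<^sub>R d \<in> profiles X" using seg_in[OF x x' t] by (simp add: d_def)
    have "DERIV \<phi> t :> (Dg (x + t *\<^sub>R d) th \<bullet> d - d \<bullet> Dg x th - chi_g / 2 * (2 * t) * (norm d)^2)"
      unfolding \<phi>_def
      by (rule derivative_eq_intros line_der[where h="\<lambda>u. g u th" and D="\<lambda>u. Dg u th"] g_der[OF th] zin refl | simp)+
    moreover have "Dg (x + t *\<^sub>R d) th \<bullet> d - d \<bullet> Dg x th - chi_g / 2 * (2 * t) * (norm d)^2 \<ge> 0"
    proof (cases "t = 0")
      case True then show ?thesis by (simp add: inner_commute)
    next
      case False
      then have tp: "t > 0" using t by simp
      have "(t *\<^sub>R d) \<bullet> (Dg (x + t *\<^sub>R d) th - Dg x th) \<ge> chi_g * (norm (t *\<^sub>R d))^2"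
        using g_mono[OF th, of "x + t *\<^sub>R d" x] by simp
      then have "t * (d \<bullet> (Dg (x + t *\<^sub>R d) th - Dg x th)) \<ge> t * (chi_g * t * (norm d)^2)"
        by (simp add: power2_eq_square algebra_simps)
      then have "d \<bullet> (Dg (x + t *\<^sub>R d) th - Dg x th) \<ge> chi_g * t * (norm d)^2"
        using tp by simp
      then show ?thesis by (simp add: inner_diff_right inner_commute)
    qed
    ultimately show "\<exists>y. DERIV \<phi> t :> y \<and> y \<ge> 0" by blast
  qed simp
  then show ?thesis by (simp add: \<phi>_def d_def inner_commute)
qed

lemma sum_y_bound:
  assumes y: "y \<in> prob_simplex K" and le: "\<And>m. m < K \<Longrightarrow> a m \<le> b m - c"
  shows "(\<Sum>m<K. y m * a m) \<le> (\<Sum>m<K. y m * b m) - c"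
proof -
  have "(\<Sum>m<K. y m * a m) \<le> (\<Sum>m<K. y m * (b m - c))"
    using y le by (intro sum_mono mult_left_mono) (auto simp: prob_simplex_def)
  also have "\<dots> = (\<Sum>m<K. y m * b m) - c * (\<Sum>m<K. y m)"
    by (simp add: right_diff_distrib sum_subtractf sum_distrib_left mult.commute)
  also have "\<dots> = (\<Sum>m<K. y m * b m) - c" using y by (simp add: prob_simplex_def)
  finally show ?thesis .
qed

lemma monotone:
  assumes ths: "set ths \<subseteq> Theta" and x: "x \<in> profiles X" and x': "x' \<in> profiles X"
    and y: "y \<in> prob_simplex (length ths)" and y': "y' \<in> prob_simplex (length ths)"
  shows "VI_pairing Df Dg g ths x y x' y' + VI_pairing Df Dg g ths x' y' x y \<le> 0"
proof -
  define K where "K = length ths"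
  define n where "n = (norm (x' - x))^2"
  have nn: "(norm (x - x'))^2 = n" by (simp add: n_def norm_minus_commute)
  have thsm: "\<And>m. m < K \<Longrightarrow> ths ! m \<in> Theta" using ths by (auto simp: K_def)
  have h1: "(\<Sum>m<K. y m * ((x' - x) \<bullet> Dg x (ths ! m))) \<le> (\<Sum>m<K. y m * (g x' (ths ! m) - g x (ths ! m))) - chi_g / 2 * n"
  proof (rule sum_y_bound)
    fix m assume "m < K"
    from g_lower[OF thsm[OF this] x x'] show "(x' - x) \<bullet> Dg x (ths ! m) \<le> g x' (ths ! m) - g x (ths ! m) - chi_g / 2 * n"
      by (simp add: n_def)
  qed (use y K_def in simp)
  have h2: "(\<Sum>m<K. y' m * ((x - x') \<bullet> Dg x' (ths ! m))) \<le> (\<Sum>m<K. y' m * (g x (ths ! m) - g x' (ths ! m))) - chi_g / 2 * n"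
  proof (rule sum_y_bound)
    fix m assume "m < K"
    from g_lower[OF thsm[OF this] x' x] nn show "(x - x') \<bullet> Dg x' (ths ! m) \<le> g x (ths ! m) - g x' (ths ! m) - chi_g / 2 * n"
      by simp
  qed (use y' K_def in simp)
  have h3: "(x' - x) \<bullet> PG Df x + (x - x') \<bullet> PG Df x' \<le> - chi_f * n"
  proof -
    have "(x' - x) \<bullet> (PG Df x' - PG Df x) \<ge> chi_f * n"
      using f_mono[of x' x] by (simp add: PG_def n_def)
    moreover have "(x' - x) \<bullet> PG Df x + (x - x') \<bullet> PG Df x' = - ((x' - x) \<bullet> (PG Df x' - PG Df x))"
      by (simp add: inner_diff_right inner_diff_left algebra_simps)
    ultimately show ?thesis by linarith
  qed
  have e1: "(\<Sum>m<K. y m * (g x' (ths ! m) - g x (ths ! m))) = (\<Sum>m<K. y m * g x' (ths ! m)) - (\<Sum>m<K. y m * g x (ths ! m))"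
    by (simp add: right_diff_distrib sum_subtractf)
  have e2: "(\<Sum>m<K. y' m * (g x (ths ! m) - g x' (ths ! m))) = (\<Sum>m<K. y' m * g x (ths ! m)) - (\<Sum>m<K. y' m * g x' (ths ! m))"
    by (simp add: right_diff_distrib sum_subtractf)
  have e3: "(\<Sum>m<K. (y' m - y m) * g x (ths ! m)) = (\<Sum>m<K. y' m * g x (ths ! m)) - (\<Sum>m<K. y m * g x (ths ! m))"
    by (simp add: left_diff_distrib sum_subtractf)
  have e4: "(\<Sum>m<K. (y m - y' m) * g x' (ths ! m)) = (\<Sum>m<K. y m * g x' (ths ! m)) - (\<Sum>m<K. y' m * g x' (ths ! m))"
    by (simp add: left_diff_distrib sum_subtractf)
  have "n \<ge> 0" by (simp add: n_def)
  then have "(chi_f + chi_g) * n \<ge> 0" using chi_sum by simp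
  then have "- chi_f * n - chi_g * n \<le> 0" by (simp add: algebra_simps)
  note pe = pairing_eq[of Df Dg g ths x y x' y'] pairing_eq[of Df Dg g ths x' y' x y]
  show ?thesis
    unfolding pe K_def[symmetric] using h1 h2 h3 e1 e2 e3 e4 \<open>- chi_f * n - chi_g * n \<le> 0\<close> by linarith
qed

lemma simplex_seg:
  assumes "y \<in> prob_simplex K" "y' \<in> prob_simplex K" "0 \<le> t" "t \<le> 1"
  shows "(\<lambda>m. y m + t * (y' m - y m)) \<in> prob_simplex K"
proof -
  have "\<And>m. m < K \<Longrightarrow> 0 \<le> y m + t * (y' m - y m)"
  proof -
    fix m assume "m < K"
    then have a: "0 \<le> y m" "0 \<le> y' m" using assms(1,2) by (auto simp: prob_simplex_def)
    have "y m + t * (y' m - y m) = (1 - t) * y m + t * y' m" by (simp add: algebra_simps)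
    also have "\<dots> \<ge> 0" using a assms(3,4) by simp
    finally show "0 \<le> y m + t * (y' m - y m)" .
  qed
  moreover have "(\<Sum>m<K. y m + t * (y' m - y m)) = 1"
    using assms(1,2) by (simp add: sum.distrib sum_distrib_left[symmetric] sum_subtractf prob_simplex_def)
  ultimately show ?thesis using assms(1,2) by (simp add: prob_simplex_def)
qed

lemma minty:
  assumes ths: "set ths \<subseteq> Theta" and x: "x \<in> profiles X" and y: "y \<in> prob_simplex (length ths)"
    and H: "\<And>x' y'. x' \<in> profiles X \<Longrightarrow> y' \<in> prob_simplex (length ths) \<Longrightarrow>
              VI_pairing Df Dg g ths x' y' x y \<le> 0"
  shows "VI_sol X Df Dg g ths x y"
  unfolding VI_sol_def
proof (intro conjI ballI x y)
  fix x'' y'' assume x'': "x'' \<in> profiles X" and y'': "y'' \<in> prob_simplex (length ths)"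
  define K where "K = length ths"
  define dx where "dx = x'' - x"
  define dy where "dy m = y'' m - y m" for m
  define xt where "xt t = x + t *\<^sub>R dx" for t :: real
  define yt where "yt t m = y m + t * dy m" for t :: real and m
  define h where "h t = (\<Sum>i\<in>UNIV. dx $ i \<bullet> (Df i (xt t) $ i))
      + (\<Sum>m<K. yt t m * (dx \<bullet> Dg (xt t) (ths ! m))) - (\<Sum>m<K. dy m * g (xt t) (ths ! m))" for t
  have thsm: "\<And>m. m < K \<Longrightarrow> ths ! m \<in> Theta" using ths by (auto simp: K_def)
  have hform: "VI_pairing Df Dg g ths (xt t) (yt t) x'' y'' = h t" if "t = 0" for t
    using that unfolding pairing_eq h_def xt_def yt_def dy_def dx_def K_def
    by (simp add: inner_vec_outer[of "x'' - x"] PG_def)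
  have neg: "VI_pairing Df Dg g ths (xt t) (yt t) x y = - t * h t" for t
  proof -
    have a: "x - xt t = - (t *\<^sub>R dx)" by (simp add: xt_def)
    have b: "\<And>m. y m - yt t m = - (t * dy m)" by (simp add: yt_def)
    show ?thesis unfolding pairing_eq a b h_def K_def[symmetric]
      by (simp add: inner_vec_outer[of dx] PG_def sum_distrib_left algebra_simps
          sum_negf[symmetric] sum.distrib[symmetric] sum_subtractf[symmetric])
  qed
  have pos: "h t \<ge> 0" if t: "t \<in> {0<..<1}" for t
  proof -
    have "xt t \<in> profiles X" using seg_in[OF x x'', of t] t by (simp add: xt_def dx_def)
    moreover have "yt t \<in> prob_simplex (length ths)"
      using simplex_seg[OF y y'', of t] t by (simp add: yt_def[abs_def] dy_def)
    ultimately have "- t * h t \<le> 0" using H neg by metis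
    then show ?thesis using t by (simp add: zero_le_mult_iff)
  qed
  have xtl: "(xt \<longlongrightarrow> x) (at_right 0)"
    unfolding xt_def[abs_def] by (auto intro!: tendsto_eq_intros)
  have Dfl: "((\<lambda>t. Df i (xt t)) \<longlongrightarrow> Df i x) (at_right 0)" for i
    by (rule isCont_tendsto_compose[OF Df_cont[OF x] xtl])
  have Dgl: "((\<lambda>t. Dg (xt t) (ths ! m)) \<longlongrightarrow> Dg x (ths ! m)) (at_right 0)" if "m < K" for m
    by (rule isCont_tendsto_compose[OF Dg_cont[OF thsm[OF that] x] xtl])
  have gl: "((\<lambda>t. g (xt t) (ths ! m)) \<longlongrightarrow> g x (ths ! m)) (at_right 0)" if "m < K" for m
    by (rule isCont_tendsto_compose[OF g_cont[OF thsm[OF that] x] xtl])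
  have ytl: "((\<lambda>t. yt t m) \<longlongrightarrow> y m) (at_right 0)" for m
    unfolding yt_def by (auto intro!: tendsto_eq_intros)
  have xt0: "xt 0 = x" and yt0: "yt 0 = y" by (auto simp: xt_def yt_def)
  have "(h \<longlongrightarrow> h 0) (at_right 0)"
    unfolding h_def[abs_def] xt0 yt0
    by (intro tendsto_intros Dfl Dgl gl ytl) auto
  moreover have "eventually (\<lambda>t. 0 \<le> h t) (at_right 0)"
    using eventually_at_right_real[of 0 1] by (rule eventually_mono) (use pos in auto)
  ultimately have "0 \<le> h 0" by (rule tendsto_lowerbound) simp
  then show "0 \<le> VI_pairing Df Dg g ths x y x'' y''" using hform[of 0] xt0 yt0 by simp
qed

lemma pairing_mid:
  "VI_pairing Df Dg g ths x y ((1/2) *\<^sub>R (x1 + x2)) (\<lambda>m. (y1 m + y2 m) / 2)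
   = (VI_pairing Df Dg g ths x y x1 y1 + VI_pairing Df Dg g ths x y x2 y2) / 2"
proof -
  have a: "((1/2) *\<^sub>R (x1 + x2) - x) \<bullet> v = ((x1 - x) \<bullet> v + (x2 - x) \<bullet> v) / 2" for v :: "real^'n^'i"
    by (simp add: inner_diff_left inner_add_left)
  have b: "(\<Sum>m<K. ((y1 m + y2 m) / 2 - y m) * c m) = ((\<Sum>m<K. (y1 m - y m) * c m) + (\<Sum>m<K. (y2 m - y m) * c m)) / 2"
    for K and c :: "nat \<Rightarrow> real"
  proof -
    have "(\<Sum>m<K. ((y1 m + y2 m) / 2 - y m) * c m) = (\<Sum>m<K. ((y1 m - y m) * c m + (y2 m - y m) * c m) / 2)"
      by (rule sum.cong) (auto simp: field_simps)
    then show ?thesis by (simp add: sum_divide_distrib[symmetric] sum.distrib)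
  qed
  show ?thesis unfolding pairing_eq a b by (simp add: sum_divide_distrib[symmetric] sum.distrib[symmetric] field_simps)
qed

lemma sol_mid:
  assumes ths: "set ths \<subseteq> Theta"
    and s1: "VI_sol X Df Dg g ths x1 y1" and s2: "VI_sol X Df Dg g ths x2 y2"
  shows "VI_sol X Df Dg g ths ((1/2) *\<^sub>R (x1 + x2)) (\<lambda>m. (y1 m + y2 m) / 2)"
proof (rule minty[OF ths])
  have x1: "x1 \<in> profiles X" and y1: "y1 \<in> prob_simplex (length ths)"
   and x2: "x2 \<in> profiles X" and y2: "y2 \<in> prob_simplex (length ths)"
    using s1 s2 by (auto simp: VI_sol_def)
  show "(1/2) *\<^sub>R (x1 + x2) \<in> profiles X"
    using convexD[OF P_convex x1 x2, of "1/2" "1/2"] by (simp add: scaleR_right_distrib)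
  have "(\<lambda>m. y1 m + (1/2) * (y2 m - y1 m)) \<in> prob_simplex (length ths)"
    by (rule simplex_seg[OF y1 y2]) auto
  moreover have "(\<lambda>m. y1 m + (1/2) * (y2 m - y1 m)) = (\<lambda>m. (y1 m + y2 m) / 2)"
    by (auto simp: field_simps)
  ultimately show "(\<lambda>m. (y1 m + y2 m) / 2) \<in> prob_simplex (length ths)" by simp
  fix x' y' assume x': "x' \<in> profiles X" and y': "y' \<in> prob_simplex (length ths)"
  have "VI_pairing Df Dg g ths x' y' x1 y1 \<le> 0"
    using monotone[OF ths x1 x' y1 y'] s1 x' y' unfolding VI_sol_def by fastforce
  moreover have "VI_pairing Df Dg g ths x' y' x2 y2 \<le> 0"
    using monotone[OF ths x2 x' y2 y'] s2 x' y' unfolding VI_sol_def by fastforce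
  ultimately show "VI_pairing Df Dg g ths x' y' ((1/2) *\<^sub>R (x1 + x2)) (\<lambda>m. (y1 m + y2 m) / 2) \<le> 0"
    unfolding pairing_mid by simp
qed

lemma minnorm_unique:
  assumes ths: "set ths \<subseteq> Theta"
    and m1: "VI_minnorm_sol X Df Dg g ths x1 y1" and m2: "VI_minnorm_sol X Df Dg g ths x2 y2"
  shows "x1 = x2 \<and> y1 = y2"
proof -
  define K where "K = length ths"
  have s1: "VI_sol X Df Dg g ths x1 y1" and s2: "VI_sol X Df Dg g ths x2 y2"
    using m1 m2 by (auto simp: VI_minnorm_sol_def)
  have y1: "y1 \<in> prob_simplex K" and y2: "y2 \<in> prob_simplex K"
    using s1 s2 by (auto simp: VI_sol_def K_def)
  have sm: "VI_sol X Df Dg g ths ((1/2) *\<^sub>R (x1 + x2)) (\<lambda>m. (y1 m + y2 m) / 2)"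
    by (rule sol_mid[OF ths s1 s2])
  have le1: "sqnorm_xy K x1 y1 \<le> sqnorm_xy K x2 y2" using m1 s2 by (auto simp: VI_minnorm_sol_def K_def)
  have le3: "sqnorm_xy K x2 y2 \<le> sqnorm_xy K x1 y1" using m2 s1 by (auto simp: VI_minnorm_sol_def K_def)
  have le2: "sqnorm_xy K x1 y1 \<le> sqnorm_xy K ((1/2) *\<^sub>R (x1 + x2)) (\<lambda>m. (y1 m + y2 m) / 2)"
    using m1 sm by (auto simp: VI_minnorm_sol_def K_def)
  have nid: "(norm ((1/2) *\<^sub>R (x1 + x2)))^2 = ((norm x1)^2 + (norm x2)^2) / 2 - (norm (x1 - x2))^2 / 4"
    by (simp add: power2_norm_eq_inner inner_add_left inner_add_right inner_diff_left inner_diff_right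
        inner_commute[of x2 x1] field_simps)
  have sid: "(\<Sum>m<K. ((y1 m + y2 m) / 2)^2) = ((\<Sum>m<K. (y1 m)^2) + (\<Sum>m<K. (y2 m)^2)) / 2 - (\<Sum>m<K. (y1 m - y2 m)^2) / 4"
  proof -
    have "(\<Sum>m<K. ((y1 m + y2 m) / 2)^2) = (\<Sum>m<K. ((y1 m)^2 + (y2 m)^2) / 2 - (y1 m - y2 m)^2 / 4)"
      by (rule sum.cong) (auto simp: power2_eq_square field_simps)
    then show ?thesis by (simp add: sum_subtractf sum_divide_distrib[symmetric] sum.distrib)
  qed
  have D: "(norm (x1 - x2))^2 + (\<Sum>m<K. (y1 m - y2 m)^2) \<le> 0"
  proof -
    note l2 = le2[unfolded sqnorm_xy_def nid sid]
    note l1 = le1[unfolded sqnorm_xy_def] and l3 = le3[unfolded sqnorm_xy_def]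
    show ?thesis
      using l1 l2 l3 by (simp add: field_simps)
  qed
  have n0: "(\<Sum>m<K. (y1 m - y2 m)^2) \<ge> 0" by (simp add: sum_nonneg)
  have "(norm (x1 - x2))^2 = 0" using D n0 by (smt (verit) zero_le_power2)
  then have "x1 = x2" by simp
  moreover have "(\<Sum>m<K. (y1 m - y2 m)^2) = 0" using D n0 by (smt (verit) zero_le_power2)
  then have "\<forall>m<K. (y1 m - y2 m)^2 = 0" by (simp add: sum_nonneg_eq_0_iff)
  then have "y1 = y2" using y1 y2 by (auto simp: prob_simplex_def fun_eq_iff) (metis not_le)
  ultimately show ?thesis by simp
qed

lemma sum_le_Max:
  assumes y: "y \<in> prob_simplex (length ths)" and ne: "ths \<noteq> []"
  shows "(\<Sum>m<length ths. y m * g u (ths ! m)) \<le> Max ((\<lambda>th. g u th) ` set ths)"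
proof -
  let ?M = "Max ((\<lambda>th. g u th) ` set ths)"
  have "(\<Sum>m<length ths. y m * g u (ths ! m)) \<le> (\<Sum>m<length ths. y m * ?M)"
    using y by (intro sum_mono mult_left_mono) (auto simp: prob_simplex_def intro!: Max_ge)
  also have "\<dots> = ?M" using y by (simp add: sum_distrib_right[symmetric] prob_simplex_def)
  finally show ?thesis .
qed

lemma VI_NE:
  assumes ths: "set ths \<subseteq> Theta" and ne: "ths \<noteq> []" and sol: "VI_sol X Df Dg g ths x y"
  shows "is_NE X f g (set ths) x"
proof -
  define K where "K = length ths"
  have x: "x \<in> profiles X" and y: "y \<in> prob_simplex K"
   and H: "\<And>x' y'. x' \<in> profiles X \<Longrightarrow> y' \<in> prob_simplex K \<Longrightarrow> 0 \<le> VI_pairing Df Dg g ths x y x' y'"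
    using sol by (auto simp: VI_sol_def K_def)
  have y0: "\<And>m. m < K \<Longrightarrow> 0 \<le> y m" and y1: "(\<Sum>m<K. y m) = 1" using y by (auto simp: prob_simplex_def)
  have thsm: "\<And>m. m < K \<Longrightarrow> ths ! m \<in> Theta" using ths by (auto simp: K_def)
  have maxeq: "(\<Sum>m<K. y m * g x (ths ! m)) = Max ((\<lambda>th. g x th) ` set ths)"
  proof (rule antisym)
    show "(\<Sum>m<K. y m * g x (ths ! m)) \<le> Max ((\<lambda>th. g x th) ` set ths)"
      using sum_le_Max[of y ths x] y ne by (simp add: K_def)
    have "Max ((\<lambda>th. g x th) ` set ths) \<in> (\<lambda>th. g x th) ` set ths"
      using ne by (intro Max_in) auto
    then obtain k where k: "k < K" "Max ((\<lambda>th. g x th) ` set ths) = g x (ths ! k)"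
      by (auto simp: in_set_conv_nth K_def)
    define e where "e m = (if m = k then 1 else (0::real))" for m
    have "e \<in> prob_simplex K" using k by (auto simp: e_def prob_simplex_def)
    from H[OF x this] have "0 \<le> VI_pairing Df Dg g ths x y x e" by (simp add: K_def)
    then have "0 \<le> - (\<Sum>m<K. (e m - y m) * g x (ths ! m))"
      unfolding pairing_eq by (simp add: K_def)
    also have "(\<Sum>m<K. (e m - y m) * g x (ths ! m)) = g x (ths ! k) - (\<Sum>m<K. y m * g x (ths ! m))"
    proof -
      have "(\<Sum>m<K. e m * g x (ths ! m)) = (\<Sum>m<K. if m = k then g x (ths ! k) else 0)"
        by (rule sum.cong) (auto simp: e_def)
      also have "\<dots> = g x (ths ! k)" using k by simp
      finally show ?thesis by (simp add: left_diff_distrib sum_subtractf)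
    qed
    finally show "Max ((\<lambda>th. g x th) ` set ths) \<le> (\<Sum>m<K. y m * g x (ths ! m))" using k by simp
  qed
  show ?thesis unfolding is_NE_def
  proof (intro conjI allI ballI x)
    fix i xi assume xi: "xi \<in> X i"
    define x'' where "x'' = upd x i xi"
    have x'': "x'' \<in> profiles X" using upd_in_profiles[OF x xi] by (simp add: x''_def)
    define d where "d = x'' - x"
    define \<Phi> where "\<Phi> u = f i u + (\<Sum>m<K. y m * g u (ths ! m))" for u
    define \<psi> where "\<psi> t = \<Phi> (x + t *\<^sub>R d)" for t
    have xi0: "x $ i \<in> X i" using x by (auto simp: profiles_def)
    have phisum: "\<Phi> u = (\<Sum>m<K. y m * (f i u + g u (ths ! m)))" for u
      unfolding \<Phi>_def using y1 by (simp add: distrib_left sum.distrib sum_distrib_right[symmetric])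
    have cvx: "\<psi> t \<le> (1 - t) * \<Phi> x + t * \<Phi> x''" if t: "0 \<le> t" "t \<le> 1" for t
    proof -
      have e: "x + t *\<^sub>R d = upd x i ((1 - t) *\<^sub>R (x $ i) + t *\<^sub>R xi)"
        by (simp add: upd_line d_def x''_def)
      have "\<psi> t = (\<Sum>m<K. y m * (f i (upd x i ((1 - t) *\<^sub>R (x $ i) + t *\<^sub>R xi)) + g (upd x i ((1 - t) *\<^sub>R (x $ i) + t *\<^sub>R xi)) (ths ! m)))"
        unfolding \<psi>_def phisum e ..
      also have "\<dots> \<le> (\<Sum>m<K. y m * ((1 - t) * (f i (upd x i (x $ i)) + g (upd x i (x $ i)) (ths ! m)) + t * (f i (upd x i xi) + g (upd x i xi) (ths ! m))))"
        by (intro sum_mono mult_left_mono convex_onD[OF cost_convex[OF thsm x]] t xi0 xi y0) auto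
      also have "\<dots> = (1 - t) * \<Phi> x + t * \<Phi> x''"
      proof -
        have "\<And>A B. (\<Sum>m<K. y m * ((1 - t) * A m + t * B m)) = (1 - t) * (\<Sum>m<K. y m * A m) + t * (\<Sum>m<K. y m * B m)"
        proof -
          fix A B :: "nat \<Rightarrow> real"
          have "(\<Sum>m<K. y m * ((1 - t) * A m + t * B m)) = (\<Sum>m<K. (1 - t) * (y m * A m) + t * (y m * B m))"
            by (rule sum.cong) (auto simp: algebra_simps)
          then show "(\<Sum>m<K. y m * ((1 - t) * A m + t * B m)) = (1 - t) * (\<Sum>m<K. y m * A m) + t * (\<Sum>m<K. y m * B m)"
            by (simp add: sum.distrib sum_distrib_left)
        qed
        from this[of "\<lambda>m. f i x + g x (ths ! m)" "\<lambda>m. f i x'' + g x'' (ths ! m)"]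
        show ?thesis unfolding phisum upd_same x''_def[symmetric] by simp
      qed
      finally show ?thesis .
    qed
    define D where "D = Df i x \<bullet> d + (\<Sum>m<K. y m * (Dg x (ths ! m) \<bullet> d))"
    have x0: "x + 0 *\<^sub>R d \<in> profiles X" using x by simp
    have der: "(\<psi> has_field_derivative D) (at 0)"
    proof -
      have a: "((\<lambda>t. f i (x + t *\<^sub>R d)) has_field_derivative (Df i x \<bullet> d)) (at 0)"
        using line_der[where h="f i" and D="Df i", OF f_der x0] by simp
      have b: "((\<lambda>t. y m * g (x + t *\<^sub>R d) (ths ! m)) has_field_derivative (y m * (Dg x (ths ! m) \<bullet> d))) (at 0)"
        if "m \<in> {..<K}" for m
        using line_der[where h="\<lambda>u. g u (ths ! m)" and D="\<lambda>u. Dg u (ths ! m)", OF g_der[OF thsm] x0] that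
        by (intro DERIV_cmult) simp
      show ?thesis unfolding \<psi>_def[abs_def] \<Phi>_def D_def
        by (intro DERIV_add DERIV_sum a b)
    qed
    have "((\<lambda>s. (\<psi> s - \<psi> 0) / (s - 0)) \<longlongrightarrow> D) (at_right 0)"
      using der unfolding has_field_derivative_iff by (rule tendsto_within_subset) simp
    moreover have "eventually (\<lambda>s. (\<psi> s - \<psi> 0) / (s - 0) \<le> \<Phi> x'' - \<Phi> x) (at_right 0)"
      using eventually_at_right_real[of 0 1]
    proof (rule eventually_mono)
      fix s :: real assume s: "s \<in> {0<..<1}"
      have "\<psi> s - \<psi> 0 \<le> s * (\<Phi> x'' - \<Phi> x)"
        using cvx[of s] s by (simp add: \<psi>_def algebra_simps)
      then show "(\<psi> s - \<psi> 0) / (s - 0) \<le> \<Phi> x'' - \<Phi> x" using s by (simp add: divide_le_eq mult.commute)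
    qed simp
    ultimately have DL: "D \<le> \<Phi> x'' - \<Phi> x" by (rule tendsto_upperbound) simp
    have "0 \<le> VI_pairing Df Dg g ths x y x'' y" using H[OF x'' y] .
    also have "VI_pairing Df Dg g ths x y x'' y = D"
    proof -
      have "d \<bullet> PG Df x = d \<bullet> Df i x"
        unfolding d_def x''_def inner_upd by (simp add: PG_def)
      then show ?thesis unfolding pairing_eq D_def by (simp add: K_def d_def inner_commute)
    qed
    finally have "\<Phi> x \<le> \<Phi> x''" using DL by simp
    moreover have "\<Phi> x'' \<le> f i x'' + Max ((\<lambda>th. g x'' th) ` set ths)"
      unfolding \<Phi>_def using sum_le_Max[of y ths x''] y ne by (simp add: K_def)
    ultimately show "game_cost f g (set ths) i x \<le> game_cost f g (set ths) i (upd x i xi)"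
      unfolding game_cost_def x''_def[symmetric] using maxeq by (simp add: \<Phi>_def)
  qed
qed

end



definition yext :: "nat list \<Rightarrow> (nat \<Rightarrow> real) \<Rightarrow> nat \<Rightarrow> real" where
  "yext idx y m = (\<Sum>k<length idx. if idx ! k = m then y k else 0)"

lemma yext_sum:
  fixes V :: "nat \<Rightarrow> 'a::real_vector"
  assumes lt: "\<And>k. k < length idx \<Longrightarrow> idx ! k < M"
  shows "(\<Sum>m<M. yext idx y m *\<^sub>R V m) = (\<Sum>k<length idx. y k *\<^sub>R V (idx ! k))"
proof -
  have "(\<Sum>m<M. yext idx y m *\<^sub>R V m) = (\<Sum>m<M. \<Sum>k<length idx. (if idx ! k = m then y k else 0) *\<^sub>R V m)"
    unfolding yext_def by (simp add: scaleR_sum_left)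
  also have "\<dots> = (\<Sum>k<length idx. \<Sum>m<M. (if idx ! k = m then y k else 0) *\<^sub>R V m)"
    by (rule sum.swap)
  also have "\<dots> = (\<Sum>k<length idx. y k *\<^sub>R V (idx ! k))"
  proof (rule sum.cong[OF refl])
    fix k assume k: "k \<in> {..<length idx}"
    have "(\<Sum>m<M. (if idx ! k = m then y k else 0) *\<^sub>R V m) = (\<Sum>m<M. if idx ! k = m then y k *\<^sub>R V (idx ! k) else 0)"
      by (rule sum.cong) auto
    also have "\<dots> = y k *\<^sub>R V (idx ! k)" using lt k by simp
    finally show "(\<Sum>m<M. (if idx ! k = m then y k else 0) *\<^sub>R V m) = y k *\<^sub>R V (idx ! k)" .
  qed
  finally show ?thesis .
qed

lemma yext_sum_real:
  fixes c :: "nat \<Rightarrow> real"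
  assumes lt: "\<And>k. k < length idx \<Longrightarrow> idx ! k < M"
  shows "(\<Sum>m<M. yext idx y m * c m) = (\<Sum>k<length idx. y k * c (idx ! k))"
  using yext_sum[OF lt, of y c] by simp

lemma yext_nth:
  assumes "distinct idx" "k < length idx"
  shows "yext idx y (idx ! k) = y k"
proof -
  have "yext idx y (idx ! k) = (\<Sum>j<length idx. if j = k then y k else 0)"
    unfolding yext_def by (rule sum.cong) (use assms nth_eq_iff_index_eq in auto)
  then show ?thesis using assms by simp
qed

lemma yext_simplex:
  assumes lt: "\<And>k. k < length idx \<Longrightarrow> idx ! k < M" and y: "y \<in> prob_simplex (length idx)"
  shows "yext idx y \<in> prob_simplex M"
proof -
  have "\<And>m. 0 \<le> yext idx y m" using y unfolding yext_def prob_simplex_def by (auto intro!: sum_nonneg)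
  moreover have "\<And>m. M \<le> m \<Longrightarrow> yext idx y m = 0"
    unfolding yext_def by (rule sum.neutral) (use lt in fastforce)
  moreover have "(\<Sum>m<M. yext idx y m) = 1"
    using yext_sum_real[OF lt, of y "\<lambda>_. 1"] y by (simp add: prob_simplex_def)
  ultimately show ?thesis by (simp add: prob_simplex_def)
qed

lemma yext_sq:
  assumes lt: "\<And>k. k < length idx \<Longrightarrow> idx ! k < M" and d: "distinct idx"
  shows "(\<Sum>m<M. (yext idx y m)^2) = (\<Sum>k<length idx. (y k)^2)"
  using yext_sum_real[OF lt, of y "yext idx y"] yext_nth[OF d]
  by (simp add: power2_eq_square)

lemma pairing_transfer:
  assumes lt: "\<And>k. k < length idx \<Longrightarrow> idx ! k < M"
  shows "VI_pairing Df Dg g (map \<theta> idx) x y x' y'' =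
         VI_pairing Df Dg g (map \<theta> [0..<M]) x (yext idx y) x' (yext idx y'')"
proof -
  have a: "(\<Sum>m<M. yext idx y m * ((x' - x) \<bullet> Dg x (map \<theta> [0..<M] ! m))) = (\<Sum>k<length idx. y k * ((x' - x) \<bullet> Dg x (\<theta> (idx ! k))))"
    using yext_sum_real[OF lt, of y "\<lambda>m. (x' - x) \<bullet> Dg x (\<theta> m)"] by simp
  have b: "(\<Sum>m<M. (yext idx y'' m - yext idx y m) * g x (map \<theta> [0..<M] ! m)) = (\<Sum>k<length idx. (y'' k - y k) * g x (\<theta> (idx ! k)))"
    using yext_sum_real[OF lt, of y "\<lambda>m. g x (\<theta> m)"] yext_sum_real[OF lt, of y'' "\<lambda>m. g x (\<theta> m)"]
    by (simp add: left_diff_distrib sum_subtractf)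
  show ?thesis unfolding pairing_eq using a b by simp
qed

lemma pairing_split:
  "VI_pairing Df Dg g ths x y x'' y'' = VI_pairing Df Dg g ths x y x'' y + VI_pairing Df Dg g ths x y x y''"
  unfolding pairing_eq by simp



theorem proposition4:
  fixes X :: "'i::finite \<Rightarrow> (real^'n::finite) set"
    and f :: "'i \<Rightarrow> real^'n^'i \<Rightarrow> real"
    and Df :: "'i \<Rightarrow> real^'n^'i \<Rightarrow> real^'n^'i"
    and g :: "real^'n^'i \<Rightarrow> 'th \<Rightarrow> real"
    and Dg :: "real^'n^'i \<Rightarrow> 'th \<Rightarrow> real^'n^'i"
    and Theta :: "'th set"
    and chi_f chi_g :: real
    and M :: nat
    and \<theta> :: "nat \<Rightarrow> 'th"
    and xs :: "real^'n^'i"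
    and ys :: "nat \<Rightarrow> real"
  assumes X_ne: "\<And>i. X i \<noteq> {}"
    and X_compact: "\<And>i. compact (X i)"
    and X_convex: "\<And>i. convex (X i)"
    and cost_convex: "\<And>i th x. th \<in> Theta \<Longrightarrow> x \<in> profiles X \<Longrightarrow>
          convex_on (X i) (\<lambda>xi. f i (upd x i xi) + g (upd x i xi) th)"
    and f_twice: "\<And>i. \<exists>U. open U \<and> convex U \<and> profiles X \<subseteq> U \<and>
          (\<forall>x\<in>U. (f i has_derivative (\<lambda>h. Df i x \<bullet> h)) (at x) \<and> Df i differentiable (at x))"
    and g_twice: "\<And>th. th \<in> Theta \<Longrightarrow> \<exists>U. open U \<and> convex U \<and> profiles X \<subseteq> U \<and>
          (\<forall>x\<in>U. ((\<lambda>u. g u th) has_derivative (\<lambda>h. Dg x th \<bullet> h)) (at x) \<and>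
                   (\<lambda>u. Dg u th) differentiable (at x))"
    and chi_sum: "chi_f + chi_g \<ge> 0"
    and f_mono: "\<And>u v. (u - v) \<bullet> ((\<chi> i. (Df i u) $ i) - (\<chi> i. (Df i v) $ i))
                         \<ge> chi_f * (norm (u - v))^2"
    and g_mono: "\<And>u v th. th \<in> Theta \<Longrightarrow> (u - v) \<bullet> (Dg u th - Dg v th) \<ge> chi_g * (norm (u - v))^2"
    and uniq_or_aggr: "\<And>S. finite S \<Longrightarrow> S \<noteq> {} \<Longrightarrow> S \<subseteq> Theta \<Longrightarrow>
          (\<exists>!x. is_NE X f g S x) \<or>
          ((\<exists>gt :: real^'n \<Rightarrow> 'th \<Rightarrow> real. \<forall>x th. th \<in> Theta \<longrightarrow> g x th = gt (aggregate x) th) \<and>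
           (\<forall>x x'. is_NE X f g S x \<longrightarrow> is_NE X f g S x' \<longrightarrow> aggregate x = aggregate x'))"
    and M_pos: "0 < M"
    and samples: "\<And>m. m < M \<Longrightarrow> \<theta> m \<in> Theta"
    and minnorm: "VI_minnorm_sol X Df Dg g (map \<theta> [0..<M]) xs ys"
  shows "Phi X Df Dg g (map \<theta> (filter (\<lambda>m. ys m > 0) [0..<M])) = Phi X Df Dg g (map \<theta> [0..<M])
         \<and> Phi X Df Dg g (map \<theta> [0..<M]) = xs"
proof -
  interpret gm X f Df g Dg Theta chi_f chi_g
  proof unfold_locales
  qed (fact X_convex cost_convex f_twice g_twice chi_sum f_mono g_mono)+
  define L where "L = map \<theta> [0..<M]"
  define idx where "idx = filter (\<lambda>m. ys m > 0) [0..<M]"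
  define K where "K = length idx"
  define Ls where "Ls = map \<theta> idx"
  define ysr where "ysr k = (if k < K then ys (idx ! k) else 0)" for k
  have lenL: "length L = M" by (simp add: L_def)
  have lenLs: "length Ls = K" by (simp add: Ls_def K_def)
  have setidx: "set idx = {m. m < M \<and> 0 < ys m}" by (auto simp: idx_def)
  have dist: "distinct idx" by (simp add: idx_def)
  have lt: "idx ! k < M" if "k < length idx" for k
  proof -
    have "idx ! k \<in> set idx" using that by (rule nth_mem)
    then show ?thesis using setidx by simp
  qed
  have thsL: "set L \<subseteq> Theta" using samples by (auto simp: L_def)
  have thsLs: "set Ls \<subseteq> Theta" using samples setidx by (auto simp: Ls_def)
  have solL: "VI_sol X Df Dg g L xs ys" using minnorm by (simp add: VI_minnorm_sol_def L_def)
  have xsP: "xs \<in> profiles X" and ysS: "ys \<in> prob_simplex M" using solL by (auto simp: VI_sol_def lenL)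
  have HL: "\<And>x' y'. x' \<in> profiles X \<Longrightarrow> y' \<in> prob_simplex M \<Longrightarrow> 0 \<le> VI_pairing Df Dg g L xs ys x' y'"
    using solL by (auto simp: VI_sol_def lenL)
  have ys0: "\<And>m. m < M \<Longrightarrow> 0 \<le> ys m" and ysM: "\<And>m. M \<le> m \<Longrightarrow> ys m = 0" and ys1: "(\<Sum>m<M. ys m) = 1"
    using ysS by (auto simp: prob_simplex_def)
  have Kpos: "Ls \<noteq> []"
  proof
    assume "Ls = []"
    then have "set idx = {}" by (simp add: Ls_def)
    then have "\<And>m. m < M \<Longrightarrow> ys m = 0" using setidx ys0 by (force simp: less_le)
    then have "(\<Sum>m<M. ys m) = 0" by simp
    then show False using ys1 by simp
  qed
  have yext_ysr: "yext idx ysr = ys"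
  proof
    fix m
    show "yext idx ysr m = ys m"
    proof (cases "m \<in> set idx")
      case True
      then obtain k where k: "k < length idx" "idx ! k = m" by (auto simp: in_set_conv_nth)
      then show ?thesis using yext_nth[OF dist k(1), of ysr] by (simp add: ysr_def K_def)
    next
      case False
      have "yext idx ysr m = 0" unfolding yext_def
      proof (rule sum.neutral, intro ballI)
        fix k assume "k \<in> {..<length idx}"
        then have "idx ! k \<in> set idx" by (simp add: nth_mem)
        then have "idx ! k \<noteq> m" using False by auto
        then show "(if idx ! k = m then ysr k else 0) = 0" by simp
      qed
      moreover have "ys m = 0"
      proof (cases "m < M")
        case True
        then have "\<not> 0 < ys m" using False setidx by auto
        then show ?thesis using ys0[OF True] by simp
      next
        case False
        then show ?thesis using ysM by simp
      qed
      ultimately show ?thesis by simp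
    qed
  qed
  have ysrS: "ysr \<in> prob_simplex K"
  proof -
    have "0 \<le> ysr k" if "k < K" for k
    proof -
      have "idx ! k \<in> set idx" using that by (simp add: nth_mem K_def)
      then show ?thesis using that setidx by (simp add: ysr_def)
    qed
    moreover have "(\<Sum>k<K. ysr k) = 1"
      using yext_sum_real[OF lt, of ysr "\<lambda>_. 1"] ys1 by (simp add: yext_ysr K_def)
    ultimately show ?thesis by (simp add: prob_simplex_def ysr_def)
  qed
  have tr: "\<And>x y x' y''. VI_pairing Df Dg g Ls x y x' y'' = VI_pairing Df Dg g L x (yext idx y) x' (yext idx y'')"
    unfolding Ls_def L_def by (rule pairing_transfer[OF lt])
  have yS: "\<And>y. y \<in> prob_simplex K \<Longrightarrow> yext idx y \<in> prob_simplex M"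
    using yext_simplex[OF lt] by (simp add: K_def)
  have sq: "\<And>x y. sqnorm_xy K x y = sqnorm_xy M x (yext idx y)"
    unfolding sqnorm_xy_def using yext_sq[OF lt dist] by (simp add: K_def)
  have solLs: "VI_sol X Df Dg g Ls xs ysr"
    unfolding VI_sol_def lenLs
  proof (intro conjI ballI xsP ysrS)
    fix x' y' assume "x' \<in> profiles X" "y' \<in> prob_simplex K"
    then show "0 \<le> VI_pairing Df Dg g Ls xs ysr x' y'" using HL yS unfolding tr yext_ysr by blast
  qed
  have NExs: "is_NE X f g (set Ls) xs" by (rule VI_NE[OF thsLs Kpos solLs])
  have ext_sol: "VI_sol X Df Dg g L x' (yext idx y')" if s': "VI_sol X Df Dg g Ls x' y'" for x' y'
  proof -
    have x'P: "x' \<in> profiles X" and y'S: "y' \<in> prob_simplex K" using s' by (auto simp: VI_sol_def lenLs)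
    have H': "\<And>x'' y''. x'' \<in> profiles X \<Longrightarrow> y'' \<in> prob_simplex K \<Longrightarrow> 0 \<le> VI_pairing Df Dg g Ls x' y' x'' y''"
      using s' by (auto simp: VI_sol_def lenLs)
    have NEx': "is_NE X f g (set Ls) x'" by (rule VI_NE[OF thsLs Kpos s'])
    have geq: "\<And>m. m < M \<Longrightarrow> g x' (L ! m) = g xs (L ! m)"
    proof -
      fix m assume m: "m < M"
      have th: "L ! m \<in> Theta" using thsL m lenL by (metis nth_mem subsetD)
      from uniq_or_aggr[of "set Ls"] thsLs Kpos
      have "(\<exists>!x. is_NE X f g (set Ls) x) \<or>
          ((\<exists>gt :: real^'n \<Rightarrow> 'th \<Rightarrow> real. \<forall>x th. th \<in> Theta \<longrightarrow> g x th = gt (aggregate x) th) \<and>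
           (\<forall>x x'. is_NE X f g (set Ls) x \<longrightarrow> is_NE X f g (set Ls) x' \<longrightarrow> aggregate x = aggregate x'))"
        by simp
      then show "g x' (L ! m) = g xs (L ! m)"
      proof
        assume "\<exists>!x. is_NE X f g (set Ls) x"
        then have "x' = xs" using NExs NEx' by blast
        then show ?thesis by simp
      next
        assume A: "(\<exists>gt :: real^'n \<Rightarrow> 'th \<Rightarrow> real. \<forall>x th. th \<in> Theta \<longrightarrow> g x th = gt (aggregate x) th) \<and>
           (\<forall>x x'. is_NE X f g (set Ls) x \<longrightarrow> is_NE X f g (set Ls) x' \<longrightarrow> aggregate x = aggregate x')"
        then obtain gt :: "real^'n \<Rightarrow> 'th \<Rightarrow> real" where gt: "\<forall>x th. th \<in> Theta \<longrightarrow> g x th = gt (aggregate x) th" by blast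
        have "aggregate x' = aggregate xs" using A NExs NEx' by blast
        then show ?thesis using gt th by simp
      qed
    qed
    show ?thesis unfolding VI_sol_def lenL
    proof (intro conjI ballI x'P yS[OF y'S])
      fix x'' y'' assume x''P: "x'' \<in> profiles X" and y''S: "y'' \<in> prob_simplex M"
      have p1: "0 \<le> VI_pairing Df Dg g L x' (yext idx y') x'' (yext idx y')"
        using H'[OF x''P y'S] unfolding tr .
      have p2: "0 \<le> VI_pairing Df Dg g L x' (yext idx y') x' ys"
        using H'[OF x'P ysrS] unfolding tr yext_ysr .
      have p3: "0 \<le> VI_pairing Df Dg g L xs ys xs y''" using HL[OF xsP y''S] .
      have e2: "VI_pairing Df Dg g L x' (yext idx y') x' ys = - (\<Sum>m<M. (ys m - yext idx y' m) * g xs (L ! m))"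
        unfolding pairing_eq lenL by (simp add: geq)
      have e3: "VI_pairing Df Dg g L xs ys xs y'' = - (\<Sum>m<M. (y'' m - ys m) * g xs (L ! m))"
        unfolding pairing_eq lenL by simp
      have e4: "VI_pairing Df Dg g L x' (yext idx y') x' y'' = - (\<Sum>m<M. (y'' m - yext idx y' m) * g xs (L ! m))"
        unfolding pairing_eq lenL by (simp add: geq)
      have e5: "(\<Sum>m<M. (y'' m - yext idx y' m) * g xs (L ! m)) =
           (\<Sum>m<M. (y'' m - ys m) * g xs (L ! m)) + (\<Sum>m<M. (ys m - yext idx y' m) * g xs (L ! m))"
        by (simp add: sum.distrib[symmetric] algebra_simps)
      have "0 \<le> VI_pairing Df Dg g L x' (yext idx y') x' y''"
        using p2 p3 e2 e3 e4 e5 by linarith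
      then show "0 \<le> VI_pairing Df Dg g L x' (yext idx y') x'' y''"
        using p1 pairing_split[of Df Dg g L x' "yext idx y'" x'' y''] by linarith
    qed
  qed
  have mnLs: "VI_minnorm_sol X Df Dg g Ls xs ysr"
    unfolding VI_minnorm_sol_def
  proof (intro conjI allI impI solLs)
    fix x' y' assume s': "VI_sol X Df Dg g Ls x' y'"
    have "sqnorm_xy M xs ys \<le> sqnorm_xy M x' (yext idx y')"
      using minnorm ext_sol[OF s'] by (simp add: VI_minnorm_sol_def L_def)
    then show "sqnorm_xy (length Ls) xs ysr \<le> sqnorm_xy (length Ls) x' y'"
      unfolding lenLs sq yext_ysr .
  qed
  have mnL: "VI_minnorm_sol X Df Dg g L xs ys" using minnorm by (simp add: L_def)
  have PhiLs: "Phi X Df Dg g Ls = xs"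
  proof -
    have "(THE z. VI_minnorm_sol X Df Dg g Ls (fst z) (snd z)) = (xs, ysr)"
      by (rule the_equality) (use mnLs minnorm_unique[OF thsLs] in \<open>auto simp: prod_eq_iff\<close>)
    then show ?thesis by (simp add: Phi_def)
  qed
  have PhiL: "Phi X Df Dg g L = xs"
  proof -
    have "(THE z. VI_minnorm_sol X Df Dg g L (fst z) (snd z)) = (xs, ys)"
      by (rule the_equality) (use mnL minnorm_unique[OF thsL] in \<open>auto simp: prod_eq_iff\<close>)
    then show ?thesis by (simp add: Phi_def)
  qed
  show ?thesis using PhiLs PhiL by (simp add: Ls_def idx_def L_def)
qed

end
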